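(* Let $p,q$ be positive integers, $z\in\mathbb{R}^p$, $w\in\mathbb{R}^q$, and let $e\in\mathbb{R}^p$ be the vector of all ones. Define $\psi:[0,+\infty)\to\mathbb{R}$ by $$\psi(\lambda):=-\lambda\|w\|+\left\langle e,\,[(\lambda+1)z-\|w\|e]^-\right\rangle,$$ and for $\lambda\ge0$ let $N(\lambda)$ be the $p\times p$ diagonal matrix $N(\lambda):=\operatorname{diag}\big(-\operatorname{sgn}([(\lambda+1)z-\|w\|e]^-)\big)$. Then $\psi$ is convex. Moreover, if $z^+\not\ge\|w\|e$ and $\langle z^-,e\rangle<\|w\|$, then: (1) for all $\lambda\ge0$, $-\|w\|+\langle e,N(\lambda)z\rangle\in\partial\psi(\lambda)$ and $-\|w\|+\langle e,N(\lambda)z\rangle<0$; (2) $\psi$ has a unique zero $\lambda_*>0$.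
   Context: For $\alpha\in\mathbb{R}$, $\alpha^+:=\max(\alpha,0)$ and $\alpha^-:=\max(-\alpha,0)$; for a vector $z\in\mathbb{R}^p$, $z^+$, $z^-$, $\operatorname{sgn}(z)$ are taken componentwise (with $\operatorname{sgn}(0)=0$), and $\operatorname{diag}(z)$ is the diagonal matrix with diagonal entries $z_1,\dots,z_p$. The order $\ge$ on vectors is componentwise, and $z^+\not\ge\|w\|e$ means that $z^+\ge\|w\|e$ fails. $\partial\psi(\lambda)$ denotes the subdifferential of the convex function $\psi$ at $\lambda$. *)

theory Defs
  imports "HOL-Analysis.Analysis"
begin

definition vpos :: "real^'n \<Rightarrow> real^'n" where
  "vpos z = (\<chi> i. max (z $ i) 0)"

definition vneg :: "real^'n \<Rightarrow> real^'n" where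
  "vneg z = (\<chi> i. max (- (z $ i)) 0)"

definition vsgn :: "real^'n \<Rightarrow> real^'n" where
  "vsgn z = (\<chi> i. sgn (z $ i))"

definition ones :: "real^'n" where
  "ones = (\<chi> i. 1)"

definition diagm :: "real^'n \<Rightarrow> real^'n^'n" where
  "diagm d = (\<chi> i j. if i = j then d $ i else 0)"

definition subdiff :: "real set \<Rightarrow> (real \<Rightarrow> real) \<Rightarrow> real \<Rightarrow> real set" where
  "subdiff S f x = {g. \<forall>y\<in>S. f y \<ge> f x + g * (y - x)}"

end

theory Submission
  imports Defs
begin

lemma psi_sum:
  fixes z :: "real^'p"
  shows "ones \<bullet> vneg ((l + 1) *\<^sub>R z - c *\<^sub>R ones) = (\<Sum>i\<in>UNIV. max (c - (l+1) * z$i) 0)"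
  by (simp add: inner_vec_def ones_def vneg_def)

lemma N_sum:
  fixes z :: "real^'p"
  shows "ones \<bullet> (diagm (- vsgn (vneg ((l + 1) *\<^sub>R z - c *\<^sub>R ones))) *v z)
     = (\<Sum>i\<in>UNIV. (if c - (l+1) * z$i > 0 then - z$i else 0))"
proof -
  have "(diagm (- vsgn (vneg ((l + 1) *\<^sub>R z - c *\<^sub>R ones))) *v z) $ i
     = (if c - (l+1) * z$i > 0 then - z$i else 0)" for i
    by (simp add: matrix_vector_mult_def diagm_def vsgn_def vneg_def ones_def
        if_distrib[of "\<lambda>x. x * _"] sum.delta cong: if_cong)
  then show ?thesis by (simp add: inner_vec_def ones_def)
qed

lemma term_conv:
  fixes a b t :: real
  assumes "0 \<le> t" "t \<le> 1"
  shows "max (t*a + (1-t)*b) 0 \<le> t * max a 0 + (1-t) * max b 0"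
proof -
  have "t*a \<le> t * max a 0" "(1-t)*b \<le> (1-t) * max b 0"
    using assms by (auto intro: mult_left_mono)
  moreover have "0 \<le> t * max a 0 + (1-t) * max b 0" using assms by simp
  ultimately show ?thesis by linarith
qed

lemma term_sub:
  fixes c l y x :: real
  shows "max (c - (y+1)*x) 0 \<ge> max (c - (l+1)*x) 0 + (if c - (l+1)*x > 0 then -x else 0) * (y - l)"
  by (auto simp: algebra_simps)

theorem proposition2:
  fixes z :: "real^'p" and w :: "real^'q"
    and psi :: "real \<Rightarrow> real" and N :: "real \<Rightarrow> real^'p^'p"
  assumes psi_def: "\<And>l. psi l = - l * norm w
                     + ones \<bullet> vneg ((l + 1) *\<^sub>R z - norm w *\<^sub>R ones)"
    and N_def: "\<And>l. N l = diagm (- vsgn (vneg ((l + 1) *\<^sub>R z - norm w *\<^sub>R ones)))"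
  shows "convex_on {0..} psi \<and>
         (\<not> (\<forall>i. vpos z $ i \<ge> (norm w *\<^sub>R ones) $ i) \<longrightarrow> vneg z \<bullet> ones < norm w \<longrightarrow>
          (\<forall>l\<ge>0. - norm w + ones \<bullet> (N l *v z) \<in> subdiff {0..} psi l
                  \<and> - norm w + ones \<bullet> (N l *v z) < 0)
          \<and> (\<exists>lst>0. psi lst = 0 \<and> (\<forall>m\<ge>0. psi m = 0 \<longrightarrow> m = lst)))"
proof -
  define c where "c = norm w"
  have c0: "c \<ge> 0" by (simp add: c_def)
  have P: "psi l = - l * c + (\<Sum>i\<in>UNIV. max (c - (l+1) * z$i) 0)" for l
    using psi_def[of l] psi_sum[where l=l and z=z and c=c] by (simp add: c_def)
  define g where "g l = - c + (\<Sum>i\<in>UNIV. (if c - (l+1) * z$i > 0 then - z$i else 0))" for l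
  have G: "- norm w + ones \<bullet> (N l *v z) = g l" for l
    using N_sum[where l=l and c=c and z=z] by (simp add: N_def c_def g_def)
  have sub: "psi y \<ge> psi l + g l * (y - l)" for y l
  proof -
    have "(\<Sum>i\<in>UNIV. max (c - (l+1) * z$i) 0 + (if c - (l+1) * z$i > 0 then - z$i else 0) * (y - l))
       \<le> (\<Sum>i\<in>UNIV. max (c - (y+1) * z$i) 0)"
      by (rule sum_mono) (rule term_sub)
    moreover have "(\<Sum>i\<in>UNIV. max (c - (l+1) * z$i) 0 + (if c - (l+1) * z$i > 0 then - z$i else 0) * (y - l))
       = (\<Sum>i\<in>UNIV. max (c - (l+1) * z$i) 0) + (\<Sum>i\<in>UNIV. (if c - (l+1) * z$i > 0 then - z$i else 0)) * (y - l)"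
      by (simp only: sum.distrib sum_distrib_right)
    ultimately show ?thesis
      by (simp add: P g_def algebra_simps)
  qed
  have conv: "convex_on {0..} psi"
  proof (rule convex_onI)
    fix t x y :: real assume t: "0 < t" "t < 1"
    have "(\<Sum>i\<in>UNIV. max (c - ((1 - t) *\<^sub>R x + t *\<^sub>R y + 1) * z$i) 0)
      \<le> (\<Sum>i\<in>UNIV. (1-t) * max (c - (x+1) * z$i) 0 + t * max (c - (y+1) * z$i) 0)"
    proof (rule sum_mono)
      fix i
      have "c - ((1 - t) *\<^sub>R x + t *\<^sub>R y + 1) * z$i
         = (1-t) * (c - (x+1) * z$i) + (1-(1-t)) * (c - (y+1) * z$i)"
        by (simp add: algebra_simps)
      then show "max (c - ((1 - t) *\<^sub>R x + t *\<^sub>R y + 1) * z$i) 0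
        \<le> (1-t) * max (c - (x+1) * z$i) 0 + t * max (c - (y+1) * z$i) 0"
        using term_conv[of "1-t" "c - (x+1) * z$i" "c - (y+1) * z$i"] t by simp
    qed
    moreover have "(\<Sum>i\<in>UNIV. (1-t) * max (c - (x+1) * z$i) 0 + t * max (c - (y+1) * z$i) 0)
      = (1-t) * (\<Sum>i\<in>UNIV. max (c - (x+1) * z$i) 0) + t * (\<Sum>i\<in>UNIV. max (c - (y+1) * z$i) 0)"
      by (simp only: sum.distrib sum_distrib_left)
    moreover have "psi ((1 - t) *\<^sub>R x + t *\<^sub>R y) = - ((1 - t) *\<^sub>R x + t *\<^sub>R y) * c
       + (\<Sum>i\<in>UNIV. max (c - ((1 - t) *\<^sub>R x + t *\<^sub>R y + 1) * z$i) 0)" by (rule P)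
    ultimately show "psi ((1 - t) *\<^sub>R x + t *\<^sub>R y) \<le> (1 - t) * psi x + t * psi y"
      by (simp add: P algebra_simps)
  qed (rule convex_real_interval)
  show ?thesis
  proof (rule conjI[OF conv], intro impI)
    assume h1: "\<not> (\<forall>i. vpos z $ i \<ge> (norm w *\<^sub>R ones) $ i)"
      and h2: "vneg z \<bullet> ones < norm w"
    obtain i0 where i0: "max (z$i0) 0 < c"
      using h1 unfolding vpos_def ones_def c_def by (auto simp del: max_less_iff_conj) (meson not_le)
    define s where "s = (\<Sum>i\<in>UNIV. max (- z$i) 0)"
    have s: "s < c" using h2 by (simp add: s_def c_def inner_vec_def vneg_def ones_def)
    have s0: "s \<ge> 0" unfolding s_def by (intro sum_nonneg) auto
    have gneg: "g l < 0" for l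
    proof -
      have "(\<Sum>i\<in>UNIV. (if c - (l+1) * z$i > 0 then - z$i else 0)) \<le> s"
        unfolding s_def by (rule sum_mono) auto
      then show ?thesis using s by (simp add: g_def)
    qed
    have dec: "psi m > psi l" if "m < l" for m l
      proof -
      have "psi m \<ge> psi l + g l * (m - l)" by (rule sub)
      moreover have "g l * (m - l) > 0" using gneg[of l] that by (simp add: mult_neg_neg)
      ultimately show ?thesis by linarith
    qed
    have psi0: "psi 0 > 0"
    proof -
      have "0 < max (c - (0+1) * z$i0) 0" using i0 by simp
      also have "\<dots> \<le> (\<Sum>i\<in>UNIV. max (c - (0+1) * z$i) 0)"
        by (rule member_le_sum) auto
      finally show ?thesis by (simp add: P)
    qed
    define L where "L = (real CARD('p) * c + s) / (c - s) + 1"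
    have L0: "L > 0"
    proof -
      have "(real CARD('p) * c + s) / (c - s) \<ge> 0" using s s0 c0 by (intro divide_nonneg_pos) auto
      then show ?thesis by (simp add: L_def)
    qed
    have psiL: "psi L < 0"
    proof -
      have "(\<Sum>i\<in>UNIV. max (c - (L+1) * z$i) 0) \<le> (\<Sum>i\<in>UNIV. c + (L+1) * max (- z$i) 0)"
      proof (rule sum_mono)
        fix i
        have "(L+1) * (- z$i) \<le> (L+1) * max (- z$i) 0" using L0 by (intro mult_left_mono) auto
        moreover have "0 \<le> (L+1) * max (- z$i) 0" using L0 by simp
        ultimately show "max (c - (L+1) * z$i) 0 \<le> c + (L+1) * max (- z$i) 0"
          using c0 by (simp add: algebra_simps)
      qed
      also have "\<dots> = real CARD('p) * c + (L+1) * s"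
        by (simp add: sum.distrib s_def sum_distrib_left)
      finally have "psi L \<le> - L * c + real CARD('p) * c + (L+1) * s" by (simp add: P)
      also have "\<dots> = (real CARD('p) * c + s) - L * (c - s)" by (simp add: algebra_simps)
      also have "L * (c - s) = (real CARD('p) * c + s) + (c - s)"
        using s by (simp add: L_def field_simps)
      finally show ?thesis using s by simp
    qed
    have cont: "continuous_on {0..L} psi"
    proof -
      have "continuous_on {0..L} (\<lambda>l. - l * c + (\<Sum>i\<in>UNIV. max (c - (l+1) * z$i) 0))"
        by (intro continuous_intros)
      then show ?thesis by (simp add: P)
    qed
    obtain lst where lst: "0 \<le> lst" "lst \<le> L" "psi lst = 0"
      using IVT2'[of psi L 0 0] cont psi0 psiL L0 by force
    have "lst > 0" using lst psi0 by (cases "lst = 0") auto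
    moreover have "\<forall>m\<ge>0. psi m = 0 \<longrightarrow> m = lst"
      using dec lst(3) by (metis less_irrefl linorder_neqE_linordered_idom)
    moreover have "\<forall>l\<ge>0. - norm w + ones \<bullet> (N l *v z) \<in> subdiff {0..} psi l
                  \<and> - norm w + ones \<bullet> (N l *v z) < 0"
      unfolding G subdiff_def using sub gneg by auto
    ultimately show "(\<forall>l\<ge>0. - norm w + ones \<bullet> (N l *v z) \<in> subdiff {0..} psi l
                  \<and> - norm w + ones \<bullet> (N l *v z) < 0)
          \<and> (\<exists>lst>0. psi lst = 0 \<and> (\<forall>m\<ge>0. psi m = 0 \<longrightarrow> m = lst))"
      using lst by blast
  qed
qed

end
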